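(* There is an absolute constant $C>0$ such that the following holds. Let $x\ge 2$ and let $A\subset \mathbb{N}\cap[x,\infty)$ be a primitive set. Then $$f(A)=\sum_{a\in A}\frac{1}{a\log a}\le 1+\frac{C}{\log x}.$$
   Context: $\mathbb{N}=\{1,2,3,\dots\}$. A set $A\subset\mathbb{N}$ is primitive if no element of $A$ divides another distinct element of $A$. For a set $A$ of integers $\ge 2$, $f(A)\coloneq\sum_{a\in A}\frac{1}{a\log a}$. *)

theory Defs
  imports "HOL-Analysis.Analysis"
begin

definition primitive :: "nat set \<Rightarrow> bool" where
  "primitive A \<longleftrightarrow> (\<forall>a\<in>A. \<forall>b\<in>A. a dvd b \<longrightarrow> a = b)"

definition f_sum :: "nat set \<Rightarrow> real" where
  "f_sum A = (\<Sum>\<^sub>\<infinity>a\<in>A. 1 / (real a * ln (real a)))"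

end

theory Submission
  imports Defs "HOL-Computational_Algebra.Primes" "HOL-Real_Asymp.Real_Asymp"
begin


lemma powr_step:
  fixes s :: real and n :: nat
  assumes "s > 1" "n \<ge> 2"
  shows "real n powr (-s) \<le> (real (n-1) powr (1-s) - real n powr (1-s)) / (s-1)"
proof -
  define r where "r = s - 1"
  define x :: real where "x = 1 / real n"
  have r: "r > 0" using assms r_def by simp
  have x: "0 < x" "x < 1" using assms x_def by auto
  have n1: "real (n-1) = real n * (1 - x)" using assms x_def by (simp add: of_nat_diff field_simps)
  have "-ln (1-x) \<ge> x" using x ln_one_minus_pos_upper_bound[of x] by linarith
  hence "-r * ln (1-x) \<ge> r * x" using r by (metis mult_left_mono less_imp_le mult_minus_left mult_minus_right)
  hence "exp (-r * ln (1-x)) \<ge> 1 + r * x"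
    using exp_ge_add_one_self[of "-r * ln (1-x)"] by linarith
  hence key: "(1-x) powr (-r) \<ge> 1 + r * x" using x by (simp add: powr_def)
  have e1: "real (n-1) powr (1-s) = real n powr (-r) * (1-x) powr (-r)"
    using n1 x assms r_def by (simp add: powr_mult)
  have e2: "real n powr (1-s) = real n powr (-r)" using r_def by simp
  have e3: "real n powr (-s) = real n powr (-r) * x"
  proof -
    have "real n powr (-s) = real n powr (-r + -1)" using r_def by simp
    also have "\<dots> = real n powr (-r) * real n powr (-1)" by (rule powr_add)
    also have "real n powr (-1) = x" using assms x_def by (simp add: powr_minus divide_inverse)
    finally show ?thesis .
  qed
  have alg: "\<And>A B. A * B - A - r * (A * x) = A * (B - 1 - r * x)" by (simp add: algebra_simps)
  have "real (n-1) powr (1-s) - real n powr (1-s) - (s-1) * real n powr (-s)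
     = real n powr (-r) * ((1-x) powr (-r) - 1 - r * x)"
    unfolding e1 e2 e3 r_def[symmetric] by (rule alg)
  also have "\<dots> \<ge> 0" using key by simp
  finally show ?thesis using assms by (simp add: field_simps)
qed

lemma zeta_partial:
  fixes s :: real
  assumes "s > 1"
  shows "(\<Sum>n=1..N. real n powr (-s)) \<le> s / (s-1)"
proof -
  have gen: "(\<Sum>n=1..N. real n powr (-s)) \<le> 1 + (1 - real N powr (1-s)) / (s-1)" if "N \<ge> 1" for N
    using that
  proof (induction N rule: dec_induct)
    case base then show ?case by simp
  next
    case (step m)
    have "(\<Sum>n=1..Suc m. real n powr (-s)) = (\<Sum>n=1..m. real n powr (-s)) + real (Suc m) powr (-s)"
      by simp
    also have "\<dots> \<le> 1 + (1 - real m powr (1-s)) / (s-1) + (real m powr (1-s) - real (Suc m) powr (1-s)) / (s-1)"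
      using step powr_step[OF assms, of "Suc m"] by simp
    also have "\<dots> = 1 + ((1 - real m powr (1-s)) + (real m powr (1-s) - real (Suc m) powr (1-s))) / (s-1)"
      by (simp add: diff_divide_distrib add_divide_distrib)
    also have "\<dots> = 1 + (1 - real (Suc m) powr (1-s)) / (s-1)" by simp
    finally show ?case .
  qed
  have bnd: "(1 - real N powr (1-s)) / (s-1) \<le> 1 / (s-1)" using assms by (simp add: divide_right_mono)
  show ?thesis
  proof (cases "N = 0")
    case True then show ?thesis using assms by simp
  next
    case False
    hence "(\<Sum>n=1..N. real n powr (-s)) \<le> 1 + (1 - real N powr (1-s)) / (s-1)"
      using gen by simp
    also have "\<dots> \<le> 1 + 1 / (s-1)" using bnd by simp
    also have "1 + 1 / (s-1) = s / (s-1)" using assms by (simp add: field_simps)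
    finally show ?thesis .
  qed
qed


lemma euler_trunc:
  fixes P :: "nat set" and s :: real
  assumes P: "finite P" "\<And>p. p \<in> P \<Longrightarrow> prime p" and s: "s > 1"
  shows "(\<Prod>p\<in>P. \<Sum>k<K. (real p powr (-s)) ^ k) \<le> s / (s-1)"
proof -
  define \<iota> where "\<iota> g = (\<Prod>p\<in>P. p ^ g p)" for g :: "nat \<Rightarrow> nat"
  define G where "G = PiE P (\<lambda>_. {..<K})"
  define M where "M = (\<Prod>p\<in>P. p ^ K)"
  have pos: "real p > 0" if "p \<in> P" for p using P(2)[OF that] prime_gt_0_nat by simp
  have "(\<Prod>p\<in>P. \<Sum>k<K. (real p powr (-s)) ^ k) = (\<Sum>g\<in>G. \<Prod>p\<in>P. (real p powr (-s)) ^ g p)"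
    unfolding G_def by (rule prod_sum_PiE) (use P in auto)
  also have "\<dots> = (\<Sum>g\<in>G. real (\<iota> g) powr (-s))"
  proof (rule sum.cong)
    fix g assume "g \<in> G"
    have "(\<Prod>p\<in>P. (real p powr (-s)) ^ g p) = (\<Prod>p\<in>P. real (p ^ g p) powr (-s))"
    proof (rule prod.cong)
      fix p assume "p \<in> P"
      then show "(real p powr (-s)) ^ g p = real (p ^ g p) powr (-s)"
        using pos[of p] by (simp add: powr_power powr_realpow[symmetric] powr_powr mult.commute)
    qed simp
    also have "\<dots> = real (\<iota> g) powr (-s)"
      unfolding \<iota>_def by (simp add: prod_powr_distrib)
    finally show "(\<Prod>p\<in>P. (real p powr (-s)) ^ g p) = real (\<iota> g) powr (-s)" .
  qed simp
  also have "\<dots> = (\<Sum>n\<in>\<iota> ` G. real n powr (-s))"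
  proof (rule sum.reindex[symmetric, unfolded comp_def])
    show "inj_on \<iota> G"
    proof (rule inj_onI)
      fix g h assume g: "g \<in> G" and h: "h \<in> G" and eq: "\<iota> g = \<iota> h"
      show "g = h"
      proof (rule PiE_ext)
        show "g \<in> PiE P (\<lambda>_. {..<K})" "h \<in> PiE P (\<lambda>_. {..<K})" using g h G_def by auto
        fix p assume "p \<in> P"
        have "multiplicity p (\<iota> g) = g p" unfolding \<iota>_def
          using multiplicity_prod_prime_powers[OF P(1), of p g] P(2) \<open>p \<in> P\<close> by auto
        moreover have "multiplicity p (\<iota> h) = h p" unfolding \<iota>_def
          using multiplicity_prod_prime_powers[OF P(1), of p h] P(2) \<open>p \<in> P\<close> by auto
        ultimately show "g p = h p" using eq by simp
      qed
    qed
  qed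
  also have "\<dots> \<le> (\<Sum>n\<in>{1..M}. real n powr (-s))"
  proof (rule sum_mono2)
    show "\<iota> ` G \<subseteq> {1..M}"
    proof
      fix n assume "n \<in> \<iota> ` G"
      then obtain g where g: "g \<in> G" "n = \<iota> g" by auto
      have "\<iota> g \<ge> 1" unfolding \<iota>_def using P(2) prime_gt_0_nat
        by (simp add: Suc_le_eq prod_pos)
      moreover have "\<iota> g \<le> M" unfolding \<iota>_def M_def
      proof (rule prod_mono)
        fix p assume "p \<in> P"
        hence "g p < K" using g G_def by auto
        moreover have "p \<ge> 1" using P(2) \<open>p \<in> P\<close> prime_gt_0_nat by (simp add: Suc_le_eq)
        ultimately show "0 \<le> p ^ g p \<and> p ^ g p \<le> p ^ K" by (simp add: power_increasing)
      qed
      ultimately show "n \<in> {1..M}" using g by simp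
    qed
  qed auto
  also have "\<dots> \<le> s / (s-1)" by (rule zeta_partial[OF s])
  finally show ?thesis .
qed

lemma euler_bound:
  fixes P :: "nat set" and s :: real
  assumes P: "finite P" "\<And>p. p \<in> P \<Longrightarrow> prime p" and s: "s > 1"
  shows "(s-1) / s \<le> (\<Prod>p\<in>P. 1 - real p powr (-s))"
proof -
  have r: "0 < real p powr (-s)" "real p powr (-s) < 1" if "p \<in> P" for p
  proof -
    have "real p > 1" using P(2)[OF that] prime_gt_1_nat by simp
    then show "0 < real p powr (-s)" "real p powr (-s) < 1" using s by (auto intro: powr_less_one)
  qed
  have lim: "(\<lambda>K. \<Prod>p\<in>P. \<Sum>k<K. (real p powr (-s)) ^ k) \<longlonglongrightarrow> (\<Prod>p\<in>P. 1 / (1 - real p powr (-s)))"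
  proof (rule tendsto_prod)
    fix p assume "p \<in> P"
    have "(\<lambda>k. (real p powr (-s)) ^ k) sums (1 / (1 - real p powr (-s)))"
      by (rule geometric_sums) (use r[OF \<open>p \<in> P\<close>] in simp)
    then show "(\<lambda>K. \<Sum>k<K. (real p powr (-s)) ^ k) \<longlonglongrightarrow> 1 / (1 - real p powr (-s))"
      by (simp add: sums_def)
  qed
  have le: "(\<Prod>p\<in>P. 1 / (1 - real p powr (-s))) \<le> s / (s-1)"
    by (rule LIMSEQ_le_const2[OF lim]) (use euler_trunc[OF P s] in auto)
  have "(\<Prod>p\<in>P. 1 / (1 - real p powr (-s))) = 1 / (\<Prod>p\<in>P. 1 - real p powr (-s))"
    by (simp add: prod_dividef)
  moreover have pp: "(\<Prod>p\<in>P. 1 - real p powr (-s)) > 0"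
    using r by (simp add: prod_pos)
  ultimately have "1 / (\<Prod>p\<in>P. 1 - real p powr (-s)) \<le> s / (s-1)" using le by simp
  then show ?thesis using pp s by (simp add: field_simps)
qed


definition Om :: "nat \<Rightarrow> nat" where "Om n = size (prime_factorization n)"

lemma Om_zero_imp: "a > 0 \<Longrightarrow> Om a = 0 \<Longrightarrow> a = 1"
  unfolding Om_def by (simp add: prime_factorization_empty_iff)

lemma Om_div: assumes "prime p" "p dvd a" "a > 0" shows "Om (a div p) + 1 = Om a"
proof -
  have a: "a = (a div p) * p" using assms by simp
  have "a div p \<noteq> 0" using assms by (metis a mult_0 not_gr0)
  hence "prime_factorization a = prime_factorization (a div p) + prime_factorization p"
    using assms by (subst a) (rule prime_factorization_mult, auto)
  then show ?thesis using assms unfolding Om_def by (simp add: prime_factorization_prime)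
qed

lemma Om_dvd: assumes "d dvd c" "c > 0" shows "Om d \<le> Om c" and "Om d = Om c \<Longrightarrow> d = c"
proof -
  have d: "d > 0" using assms by (metis dvd_0_left_iff not_gr0)
  have sub: "prime_factorization d \<subseteq># prime_factorization c"
    using assms d by (simp add: prime_factorization_subset_iff_dvd)
  then show "Om d \<le> Om c" unfolding Om_def by (rule size_mset_mono)
  assume "Om d = Om c"
  hence "prime_factorization d = prime_factorization c"
    using sub unfolding Om_def by (metis subset_mset.less_le mset_subset_size nat_less_le)
  then show "d = c" using d assms
    by (metis prime_factorization_subset_iff_dvd dvd_antisym subset_mset.order_refl gr0_conv_Suc
        nat.distinct(1))
qed

lemma level_lemma:
  fixes \<phi> :: "nat \<Rightarrow> nat \<Rightarrow> real" and P :: "nat set"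
  assumes P: "finite P" and primeP: "\<And>p. p \<in> P \<Longrightarrow> prime p"
    and nonneg: "\<And>b p. \<phi> b p \<ge> 0"
    and cons: "\<And>b. b > 0 \<Longrightarrow> prime_factors b \<subseteq> P \<Longrightarrow>
        (\<Sum>p\<in>P. \<phi> b p) \<le> (\<Sum>p\<in>{p\<in>P. p dvd b}. \<phi> (b div p) p) + (if b = 1 then 1 else 0)"
  shows "finite A \<Longrightarrow> primitive A \<Longrightarrow> (\<forall>a\<in>A. a > 0 \<and> prime_factors a \<subseteq> P) \<Longrightarrow> (\<forall>a\<in>A. Om a \<le> k) \<Longrightarrow>
     (\<Sum>a\<in>A. (\<Sum>p\<in>{p\<in>P. p dvd a}. \<phi> (a div p) p) + (if a = 1 then 1 else 0)) \<le> 1"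
proof (induction k arbitrary: A)
  define G where "G a = (\<Sum>p\<in>{p\<in>P. p dvd a}. \<phi> (a div p) p) + (if a = 1 then 1 else (0::real))" for a
  case 0
  hence "A \<subseteq> {1}" using Om_zero_imp by auto
  have e1: "{p\<in>P. p dvd 1} = {}" using primeP[of "Suc 0"] by auto
  have "G 1 = 1" unfolding G_def e1 by simp
  have "(\<Sum>a\<in>A. G a) \<le> 1"
  proof (cases "A = {}")
    case False
    with \<open>A \<subseteq> {1}\<close> have "A = {1}" by blast
    then show ?thesis using \<open>G 1 = 1\<close> by simp
  qed simp
  then show ?case unfolding G_def .
next
  define G where "G a = (\<Sum>p\<in>{p\<in>P. p dvd a}. \<phi> (a div p) p) + (if a = 1 then 1 else (0::real))" for a
  define H where "H a = (\<Sum>p\<in>{p\<in>P. p dvd a}. \<phi> (a div p) p)" for a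
  case (Suc k)
  note fin = Suc.prems(1) and prim = Suc.prems(2) and posP = Suc.prems(3) and OmA = Suc.prems(4)
  define Ak where "Ak = {a\<in>A. Om a = Suc k}"
  define L where "L = A - Ak"
  define S where "S = (SIGMA a:Ak. {p\<in>P. p dvd a})"
  define B where "B = (\<lambda>(a,p). a div p) ` S"
  have finAk: "finite Ak" using fin Ak_def by simp
  have finS: "finite S" unfolding S_def using finAk P by auto
  have finB: "finite B" unfolding B_def using finS by simp
  have primeS: "prime p" "p dvd a" "a \<in> A" "Om a = Suc k" if "(a,p) \<in> S" for a p
    using that posP primeP unfolding S_def Ak_def by auto
  have Bex: "\<exists>a p. (a,p) \<in> S \<and> b = a div p" if "b \<in> B" for b
    using that unfolding B_def by auto
  have OmB: "Om b = k" if "b \<in> B" for b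
  proof -
    obtain a p where ap: "(a,p) \<in> S" "b = a div p" using Bex[OF \<open>b \<in> B\<close>] by blast
    have a0: "a > 0" using posP primeS(3)[OF ap(1)] by blast
    have "Om (a div p) + 1 = Om a" by (rule Om_div[OF primeS(1,2)[OF ap(1)] a0])
    then show ?thesis using primeS(4)[OF ap(1)] ap(2) by simp
  qed
  have Bdvd: "\<exists>a\<in>Ak. b dvd a" if "b \<in> B" for b
  proof -
    obtain a p where ap: "(a,p) \<in> S" "b = a div p" using Bex[OF \<open>b \<in> B\<close>] by blast
    hence aAk: "a \<in> Ak" and pa: "p dvd a" unfolding S_def by auto
    have "a = (a div p) * p" using pa by simp
    hence "b dvd a" using ap(2) by (metis dvd_triv_left)
    then show ?thesis using aAk by blast
  qed
  have Bpos: "b > 0 \<and> prime_factors b \<subseteq> P" if "b \<in> B" for b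
  proof -
    obtain a where a: "a \<in> Ak" "b dvd a" using Bdvd[OF \<open>b \<in> B\<close>] by blast
    have "a > 0" "prime_factors a \<subseteq> P" using posP a Ak_def by auto
    hence "b > 0" using a(2) by (simp add: dvd_pos_nat)
    moreover have "prime_factors b \<subseteq> prime_factors a"
      using a(2) \<open>a > 0\<close> by (intro dvd_prime_factors) auto
    ultimately show ?thesis using \<open>prime_factors a \<subseteq> P\<close> by blast
  qed
  have LB_disj: "L \<inter> B = {}"
  proof (rule ccontr)
    assume "L \<inter> B \<noteq> {}"
    then obtain c where c: "c \<in> L" "c \<in> B" by auto
    obtain a where a: "a \<in> Ak" "c dvd a" using Bdvd c by auto
    have "c = a" using prim c a unfolding primitive_def L_def Ak_def by auto
    then show False using c a L_def by auto
  qed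
  have primA': "primitive (L \<union> B)"
    unfolding primitive_def
  proof (intro ballI impI)
    fix c d assume c: "c \<in> L \<union> B" and d: "d \<in> L \<union> B" and cd: "c dvd d"
    show "c = d"
    proof (cases "c \<in> L")
      case cL: True
      show ?thesis
      proof (cases "d \<in> L")
        case True then show ?thesis using cL cd prim unfolding primitive_def L_def by auto
      next
        case False
        hence dB: "d \<in> B" using d by auto
        obtain a where a: "a \<in> Ak" "d dvd a" using Bdvd dB by auto
        have "c dvd a" using cd a dvd_trans by blast
        hence "c = a" using prim cL a unfolding primitive_def L_def Ak_def by auto
        then show ?thesis using cL a L_def by auto
      qed
    next
      case False
      hence cB: "c \<in> B" using c by auto
      obtain a where a: "a \<in> Ak" "c dvd a" using Bdvd cB by auto
      have dpos: "d > 0" using d posP Bpos L_def by auto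
      have "Om c \<le> Om d" using Om_dvd(1)[OF cd dpos] .
      moreover have "Om d \<le> k"
      proof (cases "d \<in> L")
        case True then show ?thesis using OmA L_def Ak_def by (auto simp: le_Suc_eq)
      next
        case False then show ?thesis using d OmB by auto
      qed
      ultimately have "Om c = Om d" using OmB[OF cB] by simp
      then show ?thesis using Om_dvd(2)[OF cd dpos] by simp
    qed
  qed
  have IH: "(\<Sum>a\<in>L \<union> B. G a) \<le> 1"
    unfolding G_def
  proof (rule Suc.IH)
    show "finite (L \<union> B)" using fin finB L_def by simp
    show "primitive (L \<union> B)" by (rule primA')
    show "\<forall>a\<in>L \<union> B. 0 < a \<and> prime_factors a \<subseteq> P" using posP Bpos L_def by auto
    show "\<forall>a\<in>L \<union> B. Om a \<le> k" using OmA OmB L_def Ak_def by (auto simp: le_Suc_eq)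
  qed
  have GH: "G a = H a" if "a \<in> Ak" for a
  proof -
    have "a \<noteq> 1" using that Ak_def Om_def by auto
    then show ?thesis unfolding G_def H_def by simp
  qed
  have "(\<Sum>a\<in>Ak. H a) = (\<Sum>(a,p)\<in>S. \<phi> (a div p) p)"
    unfolding H_def S_def using finAk P by (subst sum.Sigma) auto
  also have "\<dots> = (\<Sum>(b,p)\<in>(\<lambda>(a,p). (a div p, p)) ` S. \<phi> b p)"
  proof -
    have "inj_on (\<lambda>(a,p). (a div p, p)) S"
    proof (rule inj_onI)
      fix x y assume x: "x \<in> S" and y: "y \<in> S" and eq: "(\<lambda>(a,p). (a div p, p)) x = (\<lambda>(a,p). (a div p, p)) y"
      obtain a p where xa: "x = (a,p)" by fastforce
      obtain a' p' where ya: "y = (a',p')" by fastforce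
      have "p = p'" "a div p = a' div p'" using eq xa ya by auto
      moreover have "p dvd a" "p' dvd a'" using primeS x y xa ya by auto
      ultimately have "a = a'" by (metis dvd_div_mult_self)
      then show "x = y" using xa ya \<open>p = p'\<close> by simp
    qed
    then show ?thesis by (subst sum.reindex) (auto simp: case_prod_beta)
  qed
  also have "\<dots> \<le> (\<Sum>(b,p)\<in>B \<times> P. \<phi> b p)"
  proof (rule sum_mono2)
    show "finite (B \<times> P)" using finB P by simp
    show "(\<lambda>(a,p). (a div p, p)) ` S \<subseteq> B \<times> P" unfolding B_def S_def by force
  qed (auto simp: nonneg)
  also have "\<dots> = (\<Sum>b\<in>B. \<Sum>p\<in>P. \<phi> b p)" by (simp add: sum.cartesian_product)
  also have "\<dots> \<le> (\<Sum>b\<in>B. G b)"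
    by (rule sum_mono) (use cons Bpos in \<open>auto simp: G_def\<close>)
  finally have AkB: "(\<Sum>a\<in>Ak. G a) \<le> (\<Sum>b\<in>B. G b)" using GH by simp
  have "(\<Sum>a\<in>A. G a) = (\<Sum>a\<in>L. G a) + (\<Sum>a\<in>Ak. G a)"
    unfolding L_def using fin Ak_def by (metis (no_types, lifting) Diff_subset mem_Collect_eq subsetI
        sum.subset_diff add.commute)
  also have "\<dots> \<le> (\<Sum>a\<in>L. G a) + (\<Sum>b\<in>B. G b)" using AkB by simp
  also have "\<dots> = (\<Sum>a\<in>L \<union> B. G a)"
    using LB_disj fin finB L_def by (simp add: sum.union_disjoint)
  finally show ?case using IH unfolding G_def by simp
qed


abbreviation II :: "(real \<Rightarrow> real) \<Rightarrow> bool" where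
  "II f \<equiv> interval_lebesgue_integrable lborel (ereal 1) \<infinity> f"

abbreviation IV :: "(real \<Rightarrow> real) \<Rightarrow> real" where
  "IV f \<equiv> interval_lebesgue_integral lborel (ereal 1) \<infinity> f"

lemma ein: "einterval (ereal 1) \<infinity> = {1::real<..}" "einterval 1 \<infinity> = {1::real<..}"
  by (auto simp: einterval_def)

lemma II_def': "II f \<longleftrightarrow> set_integrable lborel {1<..} f"
  by (rule interval_integrable_to_infinity_eq)

lemma IV_def': "IV f = (LINT x : {1<..} | lborel. f x)"
  by (rule interval_integral_to_infinity_eq)

lemma IV_mono:
  assumes "II f" "II g" "\<And>s. 1 < s \<Longrightarrow> f s \<le> g s"
  shows "IV f \<le> IV g"
proof -
  have "IV f = (LINT x : {1<..} | lborel. f x)" by (rule IV_def')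
  also have "\<dots> \<le> (LINT x : {1<..} | lborel. g x)"
    by (rule set_integral_mono) (use assms in \<open>auto simp: II_def'\<close>)
  also have "\<dots> = IV g" by (rule IV_def'[symmetric])
  finally show ?thesis .
qed

lemma IV_sum:
  fixes f :: "'i \<Rightarrow> real \<Rightarrow> real"
  assumes "finite I" "\<And>i. i \<in> I \<Longrightarrow> II (f i)"
  shows "II (\<lambda>s. \<Sum>i\<in>I. f i s) \<and> IV (\<lambda>s. \<Sum>i\<in>I. f i s) = (\<Sum>i\<in>I. IV (f i))"
  using assms
proof (induction I rule: finite_induct)
  case empty
  then show ?case by (simp add: II_def' set_integrable_def)
next
  case (insert x F)
  have ix: "II (f x)" using insert by simp
  have iF: "II (\<lambda>s. \<Sum>i\<in>F. f i s)" "IV (\<lambda>s. \<Sum>i\<in>F. f i s) = (\<Sum>i\<in>F. IV (f i))" using insert by auto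
  show ?case using interval_lebesgue_integral_add[OF ix iF(1)] iF(2) insert(1,2) by simp
qed

lemma II_bound:
  assumes "II g" "continuous_on UNIV f" "\<And>s. 1 < s \<Longrightarrow> \<bar>f s\<bar> \<le> g s"
  shows "II f"
  unfolding II_def'
proof (rule set_integrable_bound[where f = g])
  show "set_integrable lborel {1<..} g" using assms(1) by (simp add: II_def')
  have "f \<in> borel_measurable borel" using assms(2) by (rule borel_measurable_continuous_onI)
  then show "set_borel_measurable lborel {1<..} f"
    unfolding set_borel_measurable_def by measurable
  show "AE x in lborel. x \<in> {1<..} \<longrightarrow> norm (f x) \<le> norm (g x)"
    using assms(3) by (auto intro!: AE_I2 order_trans[OF _ abs_ge_self])
qed

definition ex :: "nat \<Rightarrow> real \<Rightarrow> real" where "ex n s = exp (- (s * ln (real n)))"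

lemma ex_pos: "ex n s > 0" by (simp add: ex_def)

lemma ex_le1: "n \<ge> 1 \<Longrightarrow> s \<ge> 0 \<Longrightarrow> ex n s \<le> 1"
  by (simp add: ex_def)

lemma ex_mult: "b > 0 \<Longrightarrow> p > 0 \<Longrightarrow> ex (b * p) s = ex b s * ex p s"
  by (simp add: ex_def ln_mult distrib_left exp_add[symmetric])

lemma ex_powr: "n > 0 \<Longrightarrow> ex n s = real n powr (-s)"
  by (simp add: ex_def powr_def)

lemma ex_deriv: "((\<lambda>s. ex n s) has_real_derivative (- ln (real n) * ex n s)) (at s)"
  unfolding ex_def by (auto intro!: derivative_eq_intros)

lemma ex_cont [continuous_intros]: "continuous_on A (\<lambda>s. ex n s)"
  unfolding ex_def by (intro continuous_intros)

lemma ex_lim_top: assumes "n > 1" shows "((\<lambda>s. ex n s) \<longlongrightarrow> 0) at_top"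
proof -
  have "filterlim (\<lambda>s. ln (real n) * s) at_top at_top"
    by (rule filterlim_tendsto_pos_mult_at_top[OF tendsto_const]) (use assms in \<open>auto intro: filterlim_ident\<close>)
  hence "filterlim (\<lambda>s. -(s * ln (real n))) at_bot at_top"
    by (simp add: filterlim_uminus_at_bot mult.commute)
  from filterlim_compose[OF exp_at_bot this] show ?thesis unfolding ex_def by (simp add: comp_def)
qed

lemma ex_int:
  assumes "n > 1"
  shows "II (ex n)" "IV (ex n) = 1 / (real n * ln (real n))"
proof -
  define F where "F s = - ex n s / ln (real n)" for s
  have ln: "ln (real n) > 0" using assms by simp
  have D: "\<And>x. ereal 1 < ereal x \<Longrightarrow> ereal x < \<infinity> \<Longrightarrow> DERIV F x :> ex n x"
    unfolding F_def using ln by (auto intro!: derivative_eq_intros ex_deriv)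
  have C: "\<And>x. ereal 1 < ereal x \<Longrightarrow> ereal x < \<infinity> \<Longrightarrow> isCont (ex n) x"
    unfolding ex_def by (intro continuous_intros)
  have N: "AE x in lborel. ereal 1 < ereal x \<longrightarrow> ereal x < \<infinity> \<longrightarrow> 0 \<le> ex n x"
    using ex_pos by (auto intro!: AE_I2 less_imp_le)
  have A: "((F \<circ> real_of_ereal) \<longlongrightarrow> F 1) (at_right (ereal 1))"
    unfolding F_def ex_def using ln by (auto simp: ereal_tendsto_simps intro!: tendsto_eq_intros)
  have B: "((F \<circ> real_of_ereal) \<longlongrightarrow> 0) (at_left \<infinity>)"
    unfolding ereal_tendsto_simps F_def
    using tendsto_divide[OF tendsto_minus[OF ex_lim_top[OF assms]] tendsto_const[of "ln (real n)"]] ln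
    by simp
  show "II (ex n)"
    using interval_integral_FTC_nonneg(1)[OF _ D C N A B] by (simp add: interval_lebesgue_integrable_def)
  have "IV (ex n) = 0 - F 1" using interval_integral_FTC_nonneg(2)[OF _ D C N A B] by simp
  also have "\<dots> = 1 / (real n * ln (real n))"
  proof -
    have "exp (-(1 * ln (real n))) = 1 / real n" using assms by (simp add: exp_minus inverse_eq_divide)
    moreover have lnne: "ln (real n) \<noteq> 0" using ln by simp
    ultimately show ?thesis unfolding F_def ex_def by (simp add: lnne)
  qed
  finally show "IV (ex n) = 1 / (real n * ln (real n))" .
qed


definition QQ :: "nat set \<Rightarrow> real \<Rightarrow> real" where "QQ P s = (\<Prod>q\<in>P. 1 - ex q s)"
definition Qp :: "nat set \<Rightarrow> nat \<Rightarrow> real \<Rightarrow> real" where "Qp P p s = (\<Prod>q\<in>P-{p}. 1 - ex q s)"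
definition ww :: "nat set \<Rightarrow> nat \<Rightarrow> nat \<Rightarrow> real \<Rightarrow> real" where
  "ww P b p s = (real (multiplicity p b) + 1) * ln (real p) * ex (b * p) s * Qp P p s"
definition phi :: "nat set \<Rightarrow> nat \<Rightarrow> nat \<Rightarrow> real" where "phi P b p = IV (ww P b p)"
definition EE :: "nat set \<Rightarrow> nat \<Rightarrow> real \<Rightarrow> real" where "EE P b s = ex b s * QQ P s"
definition EE' :: "nat set \<Rightarrow> nat \<Rightarrow> real \<Rightarrow> real" where
  "EE' P b s = - ln (real b) * ex b s * QQ P s + ex b s * (\<Sum>p\<in>P. ln (real p) * ex p s * Qp P p s)"

lemma fac_bounds: "q \<ge> 1 \<Longrightarrow> s \<ge> 0 \<Longrightarrow> 0 \<le> 1 - ex q s \<and> 1 - ex q s \<le> 1"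
  using ex_le1[of q s] ex_pos[of q s] by simp

lemma QQ_bounds:
  assumes "\<And>q. q \<in> P \<Longrightarrow> q \<ge> 1" "s \<ge> 0"
  shows "0 \<le> QQ P s" "QQ P s \<le> 1" "0 \<le> Qp P p s" "Qp P p s \<le> 1"
  unfolding QQ_def Qp_def using fac_bounds assms
  by (auto intro!: prod_nonneg prod_le_1)

lemma QQ_split: "finite P \<Longrightarrow> p \<in> P \<Longrightarrow> QQ P s = (1 - ex p s) * Qp P p s"
  unfolding QQ_def Qp_def by (rule prod.remove)

lemma QQ_le_Qp:
  assumes "finite P" "\<And>q. q \<in> P \<Longrightarrow> q \<ge> 1" "s \<ge> 0" "p \<in> P"
  shows "QQ P s \<le> Qp P p s"
proof -
  have "QQ P s = (1 - ex p s) * Qp P p s" using QQ_split assms by blast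
  also have "\<dots> \<le> 1 * Qp P p s"
    by (rule mult_right_mono) (use fac_bounds[of p s] QQ_bounds(3)[of P s p] assms in auto)
  finally show ?thesis by simp
qed

lemma QQ_deriv:
  "((\<lambda>s. QQ P s) has_real_derivative (\<Sum>p\<in>P. ln (real p) * ex p s * Qp P p s)) (at s)"
proof -
  have "((\<lambda>s. \<Prod>q\<in>P. 1 - ex q s) has_real_derivative
      (\<Sum>q\<in>P. (ln (real q) * ex q s) * (\<Prod>y\<in>P-{q}. 1 - ex y s))) (at s)"
    by (rule has_field_derivative_prod) (auto intro!: derivative_eq_intros ex_deriv)
  then show ?thesis unfolding QQ_def Qp_def .
qed

lemma EE_deriv: "((\<lambda>s. EE P b s) has_real_derivative EE' P b s) (at s)"
  unfolding EE_def EE'_def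
  by (auto intro!: derivative_eq_intros ex_deriv QQ_deriv simp: algebra_simps)

lemma QQ_cont [continuous_intros]: "continuous_on A (\<lambda>s. QQ P s)"
  unfolding QQ_def by (intro continuous_intros)

lemma Qp_cont [continuous_intros]: "continuous_on A (\<lambda>s. Qp P p s)"
  unfolding Qp_def by (intro continuous_intros)

lemma ww_cont: "continuous_on A (ww P b p)"
  unfolding ww_def by (intro continuous_intros)

lemma EE'_cont: "continuous_on A (EE' P b)"
  unfolding EE'_def by (intro continuous_intros)

lemma ww_nonneg:
  assumes "\<And>q. q \<in> P \<Longrightarrow> q \<ge> 1" "s \<ge> 0" "p \<ge> 1"
  shows "0 \<le> ww P b p s"
  unfolding ww_def using QQ_bounds(3)[OF assms(1,2)] ex_pos[of "b*p" s] assms(3)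
  by (intro mult_nonneg_nonneg) auto

lemma ww_int:
  assumes "\<And>q. q \<in> P \<Longrightarrow> q \<ge> 1" "b > 0" "p > 1"
  shows "II (ww P b p)"
proof (rule II_bound[OF _ ww_cont])
  have bp: "b * p > 1" using assms by (metis less_1_mult le_less_trans nat_less_le not_less_eq
       less_one mult_1 mult_less_mono1 One_nat_def gr0_conv_Suc)
  show "II (\<lambda>s. ((real (multiplicity p b) + 1) * ln (real p)) * ex (b * p) s)"
    using ex_int(1)[OF bp] by simp
  fix s :: real assume s: "1 < s"
  have "0 \<le> ww P b p s" by (rule ww_nonneg) (use assms s in auto)
  moreover have "ww P b p s \<le> ((real (multiplicity p b) + 1) * ln (real p)) * ex (b * p) s"
  proof -
    have "Qp P p s \<le> 1" using QQ_bounds(4)[of P s p, OF assms(1)] s by simp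
    moreover have "0 \<le> (real (multiplicity p b) + 1) * ln (real p) * ex (b * p) s"
      using assms ex_pos[of "b*p" s] by simp
    ultimately show ?thesis unfolding ww_def by (metis mult_left_mono mult.right_neutral)
  qed
  ultimately show "\<bar>ww P b p s\<bar> \<le> ((real (multiplicity p b) + 1) * ln (real p)) * ex (b * p) s"
    by simp
qed


lemma ln_fact:
  assumes P: "finite P" "\<And>p. p \<in> P \<Longrightarrow> prime p" and b: "b > 0" "prime_factors b \<subseteq> P"
  shows "ln (real b) = (\<Sum>p\<in>P. real (multiplicity p b) * ln (real p))"
proof -
  have "b = (\<Prod>p\<in>prime_factors b. p ^ multiplicity p b)" using b prime_factorization_nat by blast
  also have "\<dots> = (\<Prod>p\<in>P. p ^ multiplicity p b)"
  proof (rule prod.mono_neutral_left[OF P(1) b(2)], rule ballI)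
    fix p assume "p \<in> P - prime_factors b"
    hence "\<not> p dvd b" using P(2) b by (auto simp: in_prime_factors_iff)
    then show "p ^ multiplicity p b = 1" by (simp add: not_dvd_imp_multiplicity_0)
  qed
  finally have "real b = real (\<Prod>p\<in>P. p ^ multiplicity p b)" by (rule arg_cong)
  also have "\<dots> = (\<Prod>p\<in>P. real p ^ multiplicity p b)" by (simp add: of_nat_prod)
  finally have "real b = (\<Prod>p\<in>P. real p ^ multiplicity p b)" .
  hence "ln (real b) = (\<Sum>p\<in>P. ln (real p ^ multiplicity p b))"
    using P by (simp add: ln_prod prime_gt_0_nat)
  also have "\<dots> = (\<Sum>p\<in>P. real (multiplicity p b) * ln (real p))"
    using P by (intro sum.cong) (auto simp: ln_realpow prime_gt_0_nat)
  finally show ?thesis .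
qed

lemma mult_div:
  fixes p b :: nat
  assumes "prime p" "p dvd b" "b > 0"
  shows "real (multiplicity p (b div p)) + 1 = real (multiplicity p b)"
proof -
  have "b = p * (b div p)" using assms by simp
  moreover have "b div p \<noteq> 0"
  proof
    assume "b div p = 0"
    hence "b = 0" using \<open>b = p * (b div p)\<close> by simp
    with assms(3) show False by linarith
  qed
  hence "multiplicity p (p * (b div p)) = Suc (multiplicity p (b div p))"
    by (intro multiplicity_times_same) (use assms in auto)
  ultimately have "multiplicity p b = Suc (multiplicity p (b div p))" by simp
  then show ?thesis by simp
qed

lemma ww_div:
  assumes "prime p" "p dvd b" "b > 0"
  shows "ww P (b div p) p s = real (multiplicity p b) * ln (real p) * ex b s * Qp P p s"
proof -
  have "b div p * p = b" using assms by simp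
  then show ?thesis using mult_div[OF assms] by (simp add: ww_def)
qed

lemma identity:
  assumes P: "finite P" "\<And>p. p \<in> P \<Longrightarrow> prime p" and b: "b > 0" "prime_factors b \<subseteq> P"
  shows "(\<Sum>p\<in>P. ww P b p s) = (\<Sum>p\<in>{p\<in>P. p dvd b}. ww P (b div p) p s) + EE' P b s"
proof -
  define m where "m p = real (multiplicity p b)" for p
  define L where "L p = ln (real p)" for p
  have pp: "p > 0" if "p \<in> P" for p using P(2)[OF that] prime_gt_0_nat by blast
  have h1: "(\<Sum>p\<in>{p\<in>P. p dvd b}. ww P (b div p) p s) = (\<Sum>p\<in>P. m p * L p * ex b s * Qp P p s)"
  proof -
    have "(\<Sum>p\<in>{p\<in>P. p dvd b}. ww P (b div p) p s) = (\<Sum>p\<in>{p\<in>P. p dvd b}. m p * L p * ex b s * Qp P p s)"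
      using ww_div P(2) b unfolding m_def L_def by (intro sum.cong) auto
    also have "\<dots> = (\<Sum>p\<in>P. if p dvd b then m p * L p * ex b s * Qp P p s else 0)"
      using P(1) by (rule sum.inter_filter)
    also have "\<dots> = (\<Sum>p\<in>P. m p * L p * ex b s * Qp P p s)"
      by (intro sum.cong) (auto simp: m_def not_dvd_imp_multiplicity_0)
    finally show ?thesis .
  qed
  have h2: "ln (real b) * ex b s * QQ P s = (\<Sum>p\<in>P. m p * L p * ex b s * ((1 - ex p s) * Qp P p s))"
  proof -
    have "ln (real b) * ex b s * QQ P s = (\<Sum>p\<in>P. m p * L p) * ex b s * QQ P s"
      using ln_fact[OF P b] unfolding m_def L_def by simp
    also have "\<dots> = (\<Sum>p\<in>P. m p * L p * ex b s * QQ P s)"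
      by (simp add: sum_distrib_right)
    also have "\<dots> = (\<Sum>p\<in>P. m p * L p * ex b s * ((1 - ex p s) * Qp P p s))"
      using QQ_split[OF P(1)] by (intro sum.cong) auto
    finally show ?thesis .
  qed
  have h3: "ex b s * (\<Sum>p\<in>P. ln (real p) * ex p s * Qp P p s) = (\<Sum>p\<in>P. ex b s * (L p * ex p s * Qp P p s))"
    unfolding L_def by (simp add: sum_distrib_left)
  have h4: "(\<Sum>p\<in>P. ww P b p s) = (\<Sum>p\<in>P. (m p + 1) * L p * (ex b s * ex p s) * Qp P p s)"
    using ex_mult[OF b(1) pp] unfolding ww_def m_def L_def by (intro sum.cong) auto
  have "(\<Sum>p\<in>{p\<in>P. p dvd b}. ww P (b div p) p s) + EE' P b s
     = (\<Sum>p\<in>P. m p * L p * ex b s * Qp P p s) - (\<Sum>p\<in>P. m p * L p * ex b s * ((1 - ex p s) * Qp P p s))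
       + (\<Sum>p\<in>P. ex b s * (L p * ex p s * Qp P p s))"
  proof -
    have "EE' P b s = - (ln (real b) * ex b s * QQ P s) + ex b s * (\<Sum>p\<in>P. ln (real p) * ex p s * Qp P p s)"
      unfolding EE'_def by simp
    also have "\<dots> = - (\<Sum>p\<in>P. m p * L p * ex b s * ((1 - ex p s) * Qp P p s))
       + (\<Sum>p\<in>P. ex b s * (L p * ex p s * Qp P p s))" by (simp only: h2 h3)
    finally show ?thesis unfolding h1 by simp
  qed
  also have "\<dots> = (\<Sum>p\<in>P. m p * L p * ex b s * Qp P p s - m p * L p * ex b s * ((1 - ex p s) * Qp P p s)
       + ex b s * (L p * ex p s * Qp P p s))"
    by (simp only: sum_subtractf sum.distrib)
  also have "\<dots> = (\<Sum>p\<in>P. (m p + 1) * L p * (ex b s * ex p s) * Qp P p s)"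
  proof (rule sum.cong[OF refl])
    fix p
    have alg: "\<And>m L E e Q :: real. m*L*E*Q - m*L*E*((1-e)*Q) + E*(L*e*Q) = (m+1)*L*(E*e)*Q"
      by (simp add: algebra_simps)
    show "m p * L p * ex b s * Qp P p s - m p * L p * ex b s * ((1 - ex p s) * Qp P p s)
       + ex b s * (L p * ex p s * Qp P p s) = (m p + 1) * L p * (ex b s * ex p s) * Qp P p s"
      by (rule alg)
  qed
  finally have X: "(\<Sum>p\<in>{p\<in>P. p dvd b}. ww P (b div p) p s) + EE' P b s
      = (\<Sum>p\<in>P. (m p + 1) * L p * (ex b s * ex p s) * Qp P p s)" .
  show ?thesis by (rule trans[OF h4 sym[OF X]])
qed


lemma EE_lim_top:
  assumes P: "finite P" "\<And>p. p \<in> P \<Longrightarrow> prime p" and b: "b > 0"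
  shows "((\<lambda>s. EE P b s) \<longlongrightarrow> (if b = 1 then 1 else 0)) at_top"
proof -
  have Q: "((\<lambda>s. QQ P s) \<longlongrightarrow> (\<Prod>q\<in>P. 1 - 0)) at_top"
    unfolding QQ_def
  proof (rule tendsto_prod)
    fix q assume "q \<in> P"
    hence "q > 1" using P(2) prime_gt_1_nat by blast
    then show "((\<lambda>s. 1 - ex q s) \<longlongrightarrow> 1 - 0) at_top"
      by (intro tendsto_diff tendsto_const ex_lim_top)
  qed
  have E: "((\<lambda>s. ex b s) \<longlongrightarrow> (if b = 1 then 1 else 0)) at_top"
  proof (cases "b = 1")
    case True
    then show ?thesis by (simp add: ex_def)
  next
    case False
    hence "b > 1" using b by simp
    then show ?thesis using ex_lim_top False by simp
  qed
  show ?thesis unfolding EE_def using tendsto_mult[OF E Q] by simp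
qed

lemma conservation:
  assumes P: "finite P" "\<And>p. p \<in> P \<Longrightarrow> prime p" and b: "b > 0" "prime_factors b \<subseteq> P"
  shows "(\<Sum>p\<in>P. phi P b p) \<le> (\<Sum>p\<in>{p\<in>P. p dvd b}. phi P (b div p) p) + (if b = 1 then 1 else 0)"
proof -
  have P1: "\<And>q. q \<in> P \<Longrightarrow> q \<ge> 1" using P(2) prime_ge_1_nat by blast
  have I1: "II (ww P b p)" if "p \<in> P" for p
    using ww_int[OF P1 b(1)] P(2)[OF that] prime_gt_1_nat by blast
  have I2: "II (ww P (b div p) p)" if "p \<in> {p\<in>P. p dvd b}" for p
  proof -
    have "prime p" "p dvd b" using that P(2) by auto
    hence "b div p > 0" using b(1) by (metis dvd_div_eq_0_iff dvd_imp_le gr0I not_less prime_gt_0_nat)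
    then show ?thesis using ww_int[OF P1] \<open>prime p\<close> prime_gt_1_nat by blast
  qed
  define S1 where "S1 s = (\<Sum>p\<in>P. ww P b p s)" for s
  define S2 where "S2 s = (\<Sum>p\<in>{p\<in>P. p dvd b}. ww P (b div p) p s)" for s
  have S1: "II S1" "IV S1 = (\<Sum>p\<in>P. phi P b p)"
    using IV_sum[OF P(1) I1] unfolding S1_def phi_def by auto
  have S2: "II S2" "IV S2 = (\<Sum>p\<in>{p\<in>P. p dvd b}. phi P (b div p) p)"
    using IV_sum[of "{p\<in>P. p dvd b}" "\<lambda>p. ww P (b div p) p", OF _ I2] P(1)
    unfolding S2_def phi_def by auto
  have eq: "EE' P b = (\<lambda>s. S1 s - S2 s)"
    using identity[OF P b] unfolding S1_def S2_def by (auto simp: fun_eq_iff algebra_simps)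
  have IE: "II (EE' P b)" "IV (EE' P b) = IV S1 - IV S2"
    unfolding eq using interval_lebesgue_integral_diff[OF S1(1) S2(1)] by auto
  have D: "\<And>x. ereal 1 < ereal x \<Longrightarrow> ereal x < \<infinity> \<Longrightarrow> (EE P b has_vector_derivative EE' P b x) (at x)"
    using EE_deriv by (simp add: has_real_derivative_iff_has_vector_derivative)
  have C: "\<And>x. ereal 1 < ereal x \<Longrightarrow> ereal x < \<infinity> \<Longrightarrow> isCont (EE' P b) x"
    using EE'_cont[of UNIV P b] by (simp add: continuous_on_eq_continuous_at)
  have Iset: "set_integrable lborel (einterval (ereal 1) \<infinity>) (EE' P b)"
    using IE(1) by (simp add: interval_lebesgue_integrable_def ein)
  have A: "((EE P b \<circ> real_of_ereal) \<longlongrightarrow> EE P b 1) (at_right (ereal 1))"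
  proof -
    have "isCont (EE P b) 1" using EE_deriv by (rule DERIV_isCont)
    hence "(EE P b \<longlongrightarrow> EE P b 1) (at_right 1)"
      by (simp add: isCont_def filterlim_at_split)
    then show ?thesis by (simp add: ereal_tendsto_simps)
  qed
  have B: "((EE P b \<circ> real_of_ereal) \<longlongrightarrow> (if b = 1 then 1 else 0)) (at_left \<infinity>)"
    unfolding ereal_tendsto_simps using EE_lim_top[OF P(1,2) b(1)] by simp
  have FTC: "IV (EE' P b) = (if b = 1 then 1 else 0) - EE P b 1"
    using interval_integral_FTC_integrable[OF _ D C Iset A B] by simp
  have E1: "EE P b 1 \<ge> 0"
    unfolding EE_def using ex_pos[of b 1] QQ_bounds(1)[of P 1, OF P1] by simp
  have "(\<Sum>p\<in>P. phi P b p) = IV S2 + IV (EE' P b)" using S1 IE by simp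
  also have "\<dots> \<le> (\<Sum>p\<in>{p\<in>P. p dvd b}. phi P (b div p) p) + (if b = 1 then 1 else 0)"
    using S2(2) FTC E1 by simp
  finally show ?thesis .
qed


lemma lim_aux:
  fixes c :: real assumes c: "c > 0"
  shows "((\<lambda>s. exp (-(c*(s-1)))) \<longlongrightarrow> 0) at_top"
    and "((\<lambda>s. (s-1) * exp (-(c*(s-1)))) \<longlongrightarrow> 0) at_top"
proof -
  have h1: "filterlim (\<lambda>s::real. s - 1) at_top at_top" by real_asymp
  have T: "filterlim (\<lambda>s. c * (s - 1)) at_top at_top"
    by (rule filterlim_tendsto_pos_mult_at_top[OF tendsto_const c h1])
  have "filterlim (\<lambda>s. -(c * (s - 1))) at_bot at_top"
    using T by (simp add: filterlim_uminus_at_bot)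
  from filterlim_compose[OF exp_at_bot this]
  show "((\<lambda>s. exp (-(c*(s-1)))) \<longlongrightarrow> 0) at_top" by (simp add: comp_def)
  have "((\<lambda>s. (c * (s - 1)) ^ 1 / exp (c * (s - 1))) \<longlongrightarrow> 0) at_top"
    using filterlim_compose[OF tendsto_power_div_exp_0[of 1] T] by (simp add: comp_def)
  from tendsto_mult[OF tendsto_const[of "1/c"] this]
  have "((\<lambda>s. (1/c) * ((c * (s - 1)) ^ 1 / exp (c * (s - 1)))) \<longlongrightarrow> 0) at_top" by simp
  moreover have "(\<lambda>s. (1/c) * ((c * (s - 1)) ^ 1 / exp (c * (s - 1)))) = (\<lambda>s. (s-1) * exp (-(c*(s-1))))"
  proof
    fix s :: real
    have "(1/c) * ((c * (s - 1)) ^ 1 / exp (c * (s - 1))) = (s-1) / exp (c * (s - 1))"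
      using c by simp
    also have "\<dots> = (s-1) * exp (-(c*(s-1)))" by (simp add: exp_minus divide_inverse)
    finally show "(1/c) * ((c * (s - 1)) ^ 1 / exp (c * (s - 1))) = (s-1) * exp (-(c*(s-1)))" .
  qed
  ultimately show "((\<lambda>s. (s-1) * exp (-(c*(s-1)))) \<longlongrightarrow> 0) at_top" by simp
qed

lemma g_int:
  fixes L :: real assumes L: "L > 0"
  defines "g \<equiv> (\<lambda>s. L * exp (-L) * ((s-1) * exp (-((L+1)*(s-1)))))"
  shows "II g" "IV g = L * exp (-L) / (L+1)^2"
proof -
  define c where "c = L + 1"
  have c: "c > 0" using L c_def by simp
  have cne: "c \<noteq> 0" using c by simp
  define F where "F s = - (L * exp (-L)) * (exp (-(c*(s-1))) * ((s-1)/c + 1/c^2))" for s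
  have D: "\<And>x. ereal 1 < ereal x \<Longrightarrow> ereal x < \<infinity> \<Longrightarrow> DERIV F x :> g x"
  proof -
    fix x :: real
    have "DERIV F x :> - (L * exp (-L)) * (exp (-(c*(x-1))) * (-c) * ((x-1)/c + 1/c^2) + exp (-(c*(x-1))) * (1/c))"
      unfolding F_def using cne by (auto intro!: derivative_eq_intros simp: field_simps)
    moreover have "- (L * exp (-L)) * (exp (-(c*(x-1))) * (-c) * ((x-1)/c + 1/c^2) + exp (-(c*(x-1))) * (1/c)) = g x"
    proof -
      show ?thesis unfolding g_def c_def[symmetric] using cne by (simp add: field_simps power2_eq_square)
    qed
    ultimately show "DERIV F x :> g x" by simp
  qed
  have C: "\<And>x. ereal 1 < ereal x \<Longrightarrow> ereal x < \<infinity> \<Longrightarrow> isCont g x"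
    unfolding g_def by (intro continuous_intros)
  have N: "AE x in lborel. ereal 1 < ereal x \<longrightarrow> ereal x < \<infinity> \<longrightarrow> 0 \<le> g x"
    unfolding g_def using L by (auto intro!: AE_I2)
  have A: "((F \<circ> real_of_ereal) \<longlongrightarrow> F 1) (at_right (ereal 1))"
    unfolding F_def using c by (auto simp: ereal_tendsto_simps intro!: tendsto_eq_intros)
  have B: "((F \<circ> real_of_ereal) \<longlongrightarrow> 0) (at_left \<infinity>)"
  proof -
    have "((\<lambda>s. - (L * exp (-L)) * ((s-1) * exp (-(c*(s-1))) / c + exp (-(c*(s-1))) / c^2)) \<longlongrightarrow>
        - (L * exp (-L)) * (0 / c + 0 / c^2)) at_top"
      using cne by (intro tendsto_intros lim_aux c) auto
    moreover have "(\<lambda>s. - (L * exp (-L)) * ((s-1) * exp (-(c*(s-1))) / c + exp (-(c*(s-1))) / c^2)) = F"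
      unfolding F_def by (auto simp: fun_eq_iff field_simps)
    ultimately show ?thesis unfolding ereal_tendsto_simps by simp
  qed
  show "II g"
    using interval_integral_FTC_nonneg(1)[OF _ D C N A B] by (simp add: interval_lebesgue_integrable_def)
  have "IV g = 0 - F 1" using interval_integral_FTC_nonneg(2)[OF _ D C N A B] by simp
  also have "\<dots> = L * exp (-L) / (L+1)^2" unfolding F_def c_def by simp
  finally show "IV g = L * exp (-L) / (L+1)^2" .
qed


lemma QQ_euler:
  assumes P: "finite P" "\<And>p. p \<in> P \<Longrightarrow> prime p" and s: "s > 1"
  shows "(s-1)/s \<le> QQ P s"
proof -
  have "QQ P s = (\<Prod>p\<in>P. 1 - real p powr (-s))"
    unfolding QQ_def using P(2) prime_gt_0_nat by (intro prod.cong) (auto simp: ex_powr)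
  then show ?thesis using euler_bound[OF P s] by simp
qed

lemma H_int:
  assumes P: "finite P" "\<And>p. p \<in> P \<Longrightarrow> prime p" and b: "b > 0"
  shows "II (\<lambda>s. \<Sum>p\<in>{p\<in>P. p dvd b}. ww P (b div p) p s)"
    "IV (\<lambda>s. \<Sum>p\<in>{p\<in>P. p dvd b}. ww P (b div p) p s) = (\<Sum>p\<in>{p\<in>P. p dvd b}. phi P (b div p) p)"
proof -
  have P1: "\<And>q. q \<in> P \<Longrightarrow> q \<ge> 1" using P(2) prime_ge_1_nat by blast
  have I2: "II (ww P (b div p) p)" if "p \<in> {p\<in>P. p dvd b}" for p
  proof -
    have "prime p" "p dvd b" using that P(2) by auto
    hence "b div p > 0" using b(1) by (metis dvd_div_eq_0_iff dvd_imp_le gr0I not_less prime_gt_0_nat)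
    then show ?thesis using ww_int[OF P1] \<open>prime p\<close> prime_gt_1_nat by blast
  qed
  show "II (\<lambda>s. \<Sum>p\<in>{p\<in>P. p dvd b}. ww P (b div p) p s)"
    "IV (\<lambda>s. \<Sum>p\<in>{p\<in>P. p dvd b}. ww P (b div p) p s) = (\<Sum>p\<in>{p\<in>P. p dvd b}. phi P (b div p) p)"
    using IV_sum[of "{p\<in>P. p dvd b}" "\<lambda>p. ww P (b div p) p", OF _ I2] P(1) unfolding phi_def by auto
qed

lemma pointwise_lower:
  assumes P: "finite P" "\<And>p. p \<in> P \<Longrightarrow> prime p" and a: "a > 1" "prime_factors a \<subseteq> P" and s: "s > 1"
  shows "ln (real a) * exp (- ln (real a)) * ((s-1) * exp (-((ln (real a) + 1)*(s-1))))
     \<le> (\<Sum>p\<in>{p\<in>P. p dvd a}. ww P (a div p) p s)"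
proof -
  define L where "L = ln (real a)"
  have a0: "a > 0" using a by simp
  have P1: "\<And>q. q \<in> P \<Longrightarrow> q \<ge> 1" using P(2) prime_ge_1_nat by blast
  have "(\<Sum>p\<in>{p\<in>P. p dvd a}. ww P (a div p) p s)
      = (\<Sum>p\<in>{p\<in>P. p dvd a}. real (multiplicity p a) * ln (real p) * ex a s * Qp P p s)"
    using ww_div P(2) a0 by (intro sum.cong) auto
  also have "\<dots> = (\<Sum>p\<in>P. if p dvd a then real (multiplicity p a) * ln (real p) * ex a s * Qp P p s else 0)"
    using P(1) by (rule sum.inter_filter)
  also have "\<dots> = (\<Sum>p\<in>P. real (multiplicity p a) * ln (real p) * ex a s * Qp P p s)"
    by (intro sum.cong) (auto simp: not_dvd_imp_multiplicity_0)
  also have "\<dots> \<ge> (\<Sum>p\<in>P. real (multiplicity p a) * ln (real p) * ex a s * QQ P s)"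
  proof (rule sum_mono)
    fix p assume p: "p \<in> P"
    have c0: "0 \<le> real (multiplicity p a) * ln (real p) * ex a s"
      using P(2)[OF p] prime_ge_1_nat ex_pos[of a s] by (simp add: less_imp_le)
    have qq: "QQ P s \<le> Qp P p s" using QQ_le_Qp[OF P(1) P1, of s p] s p by simp
    from mult_left_mono[OF qq c0] show "real (multiplicity p a) * ln (real p) * ex a s * QQ P s
        \<le> real (multiplicity p a) * ln (real p) * ex a s * Qp P p s"
      .
  qed
  moreover have "(\<Sum>p\<in>P. real (multiplicity p a) * ln (real p) * ex a s * QQ P s) = L * ex a s * QQ P s"
    unfolding L_def by (simp add: ln_fact[OF P a0 a(2)] sum_distrib_right)
  moreover have "L * ex a s * QQ P s \<ge> L * exp (-L) * ((s-1) * exp (-((L + 1)*(s-1))))"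
  proof -
    have Lp: "L > 0" unfolding L_def using a by simp
    have ex: "ex a s = exp (-L) * exp (-(L*(s-1)))"
      unfolding ex_def L_def by (simp add: exp_add[symmetric] algebra_simps)
    have q: "QQ P s \<ge> (s-1) * exp (-(s-1))"
    proof -
      have "exp (s-1) \<ge> 1 + (s-1)" by (rule exp_ge_add_one_self)
      hence "inverse (exp (s-1)) \<le> inverse s" using s by (intro le_imp_inverse_le) auto
      moreover have "exp (-(s-1)) = inverse (exp (s-1))" by (rule exp_minus)
      ultimately have "exp (-(s-1)) \<le> inverse s" by (simp only:)
      hence "1/s \<ge> exp (-(s-1))" by (simp only: inverse_eq_divide)
      hence "(s-1)/s \<ge> (s-1) * exp (-(s-1))" using s
        by (metis divide_inverse mult_left_mono less_imp_le diff_gt_0_iff_gt inverse_eq_divide)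
      then show ?thesis using QQ_euler[OF P s] by linarith
    qed
    have "L * exp (-L) * ((s-1) * exp (-((L + 1)*(s-1))))
        = L * (exp (-L) * exp (-(L*(s-1)))) * ((s-1) * exp (-(s-1)))"
      by (simp add: exp_add[symmetric] algebra_simps)
    also have "\<dots> \<le> L * (exp (-L) * exp (-(L*(s-1)))) * QQ P s"
      using q Lp by (intro mult_left_mono) auto
    finally show ?thesis using ex by simp
  qed
  ultimately show ?thesis unfolding L_def by linarith
qed

lemma lower_bound:
  assumes P: "finite P" "\<And>p. p \<in> P \<Longrightarrow> prime p" and a: "a > 1" "prime_factors a \<subseteq> P"
  shows "ln (real a) / (real a * (ln (real a) + 1)^2) \<le> (\<Sum>p\<in>{p\<in>P. p dvd a}. phi P (a div p) p)"
proof -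
  define L where "L = ln (real a)"
  have Lp: "L > 0" unfolding L_def using a by simp
  have a0: "a > 0" using a by simp
  have "L / (real a * (L + 1)^2) = L * exp (-L) / (L+1)^2"
    unfolding L_def using a0 by (simp add: exp_minus field_simps)
  also have "\<dots> = IV (\<lambda>s. L * exp (-L) * ((s-1) * exp (-((L+1)*(s-1)))))"
    using g_int(2)[OF Lp] by simp
  also have "\<dots> \<le> IV (\<lambda>s. \<Sum>p\<in>{p\<in>P. p dvd a}. ww P (a div p) p s)"
    by (rule IV_mono[OF g_int(1)[OF Lp] H_int(1)[OF P a0]])
       (use pointwise_lower[OF P a] in \<open>unfold L_def, blast\<close>)
  also have "\<dots> = (\<Sum>p\<in>{p\<in>P. p dvd a}. phi P (a div p) p)" by (rule H_int(2)[OF P a0])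
  finally show ?thesis unfolding L_def .
qed


lemma phi_nonneg:
  assumes P: "finite P" "\<And>p. p \<in> P \<Longrightarrow> prime p" and b: "b > 0" and p: "p \<in> P"
  shows "phi P b p \<ge> 0"
proof -
  have P1: "\<And>q. q \<in> P \<Longrightarrow> q \<ge> 1" using P(2) prime_ge_1_nat by blast
  have pp: "p > 1" using P(2)[OF p] prime_gt_1_nat by blast
  have z: "II (\<lambda>_. 0)" by (simp add: II_def' set_integrable_def)
  have "IV (\<lambda>_. 0) \<le> IV (ww P b p)"
    by (rule IV_mono[OF z ww_int[OF P1 b pp]]) (use ww_nonneg[OF P1] pp in auto)
  then show ?thesis unfolding phi_def by simp
qed

lemma ln2_ge: "ln (2::real) \<ge> 1/2"
proof -
  have "ln (1 - 1/2::real) \<le> - (1/2)" by (rule ln_one_minus_pos_upper_bound) auto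
  moreover have "ln (1 - 1/2::real) = - ln 2" by (simp add: ln_div)
  ultimately show ?thesis by simp
qed

lemma finite_bound:
  fixes x :: real and F :: "nat set"
  assumes x: "x \<ge> 2" and F: "finite F" "\<forall>a\<in>F. real a \<ge> x" "primitive F"
  shows "(\<Sum>a\<in>F. 1 / (real a * ln (real a))) \<le> (1 + 1 / ln x)^2"
proof (cases "F = {}")
  case True then show ?thesis by simp
next
  case False
  define N where "N = Max F"
  define P where "P = {p. prime p \<and> p \<le> N}"
  have finP: "finite P" unfolding P_def by simp
  have primeP: "\<And>p. p \<in> P \<Longrightarrow> prime p" unfolding P_def by simp
  have a2: "a \<ge> 2" if "a \<in> F" for a using F(2) that x by fastforce
  have pfP: "prime_factors a \<subseteq> P" if "a \<in> F" for a
  proof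
    fix p assume "p \<in> prime_factors a"
    hence "prime p" "p dvd a" by (auto simp: in_prime_factors_iff)
    moreover have "a > 0" using a2[OF that] by simp
    ultimately have "p \<le> a" by (simp add: dvd_imp_le)
    moreover have "a \<le> N" unfolding N_def using F(1) that by simp
    ultimately show "p \<in> P" unfolding P_def using \<open>prime p\<close> by simp
  qed
  define \<phi> where "\<phi> b p = (if b > 0 \<and> p \<in> P then phi P b p else 0)" for b p
  have nonneg: "\<And>b p. \<phi> b p \<ge> 0" unfolding \<phi>_def using phi_nonneg[OF finP primeP] by auto
  have divpos: "b div p > 0" if "b > 0" "p \<in> P" "p dvd b" for b p
    using that primeP[OF that(2)] by (metis dvd_div_eq_0_iff dvd_imp_le gr0I not_less prime_gt_0_nat)
  have Hphi: "(\<Sum>p\<in>{p\<in>P. p dvd b}. \<phi> (b div p) p) = (\<Sum>p\<in>{p\<in>P. p dvd b}. phi P (b div p) p)"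
    if "b > 0" for b
    using divpos[OF that] unfolding \<phi>_def by (intro sum.cong) auto
  have cons: "(\<Sum>p\<in>P. \<phi> b p) \<le> (\<Sum>p\<in>{p\<in>P. p dvd b}. \<phi> (b div p) p) + (if b = 1 then 1 else 0)"
    if "b > 0" "prime_factors b \<subseteq> P" for b
  proof -
    have "(\<Sum>p\<in>P. \<phi> b p) = (\<Sum>p\<in>P. phi P b p)" unfolding \<phi>_def using that by simp
    also have "\<dots> \<le> (\<Sum>p\<in>{p\<in>P. p dvd b}. phi P (b div p) p) + (if b = 1 then 1 else 0)"
      by (rule conservation[OF finP primeP that])
    finally show ?thesis using Hphi[OF that(1)] by simp
  qed
  define k where "k = Max (Om ` F)"
  have lev: "(\<Sum>a\<in>F. (\<Sum>p\<in>{p\<in>P. p dvd a}. \<phi> (a div p) p) + (if a = 1 then 1 else 0)) \<le> 1"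
  proof (rule level_lemma[OF finP primeP nonneg cons F(1) F(3)])
    show "\<forall>a\<in>F. 0 < a \<and> prime_factors a \<subseteq> P" using a2 pfP by fastforce
    show "\<forall>a\<in>F. Om a \<le> k" unfolding k_def using F(1) by simp
  qed
  define H where "H a = (\<Sum>p\<in>{p\<in>P. p dvd a}. phi P (a div p) p)" for a
  have lev2: "(\<Sum>a\<in>F. H a) \<le> 1"
  proof -
    have "(\<Sum>a\<in>F. H a) = (\<Sum>a\<in>F. (\<Sum>p\<in>{p\<in>P. p dvd a}. \<phi> (a div p) p) + (if a = 1 then 1 else 0))"
    proof (rule sum.cong[OF refl])
      fix a assume "a \<in> F"
      hence "a \<noteq> 1" "a > 0" using a2 by fastforce+
      then show "H a = (\<Sum>p\<in>{p\<in>P. p dvd a}. \<phi> (a div p) p) + (if a = 1 then 1 else 0)"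
        unfolding H_def using Hphi by simp
    qed
    then show ?thesis using lev by simp
  qed
  define u where "u = 1 / ln x"
  have lnx: "ln x > 0" using x by simp
  have each: "1 / (real a * ln (real a)) \<le> (1 + u)^2 * H a" if "a \<in> F" for a
  proof -
    define L where "L = ln (real a)"
    have a1: "a > 1" using a2[OF that] by simp
    have L: "L > 0" unfolding L_def using a1 by simp
    have xa: "x \<le> real a" using F(2) that by blast
    have Lx: "L \<ge> ln x" unfolding L_def using xa x by (subst ln_le_cancel_iff) auto
    have "1 / L \<le> u" unfolding u_def using Lx lnx L by (simp add: frac_le)
    hence uu: "(1 + 1/L)^2 \<le> (1 + u)^2" using L by (intro power_mono) auto
    have lb: "L / (real a * (L + 1)^2) \<le> H a"
      unfolding H_def L_def using lower_bound[OF finP primeP a1 pfP[OF that]] .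
    have "1 / (real a * L) = (1 + 1/L)^2 * (L / (real a * (L + 1)^2))"
    proof -
      have e: "1 + 1/L = (L+1)/L" using L by (simp add: field_simps)
      have n: "L + 1 \<noteq> 0" "L \<noteq> 0" "real a \<noteq> 0" using L a1 by auto
      show ?thesis unfolding e using n by (simp add: power_divide power2_eq_square)
    qed
    also have "\<dots> \<le> (1 + u)^2 * H a"
    proof (rule mult_mono[OF uu lb])
      show "0 \<le> (1 + u)^2" by simp
      show "0 \<le> L / (real a * (L + 1)^2)" using L by simp
    qed
    finally show ?thesis unfolding L_def .
  qed
  have "(\<Sum>a\<in>F. 1 / (real a * ln (real a))) \<le> (\<Sum>a\<in>F. (1 + u)^2 * H a)"
    using each by (rule sum_mono)
  also have "\<dots> = (1 + u)^2 * (\<Sum>a\<in>F. H a)" by (simp add: sum_distrib_left)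
  also have "\<dots> \<le> (1 + u)^2 * 1" using lev2 by (intro mult_left_mono) auto
  finally show ?thesis unfolding u_def by simp
qed

theorem theorem1p1:
  shows "\<exists>C::real. C > 0 \<and>
    (\<forall>(x::real) (A::nat set). x \<ge> 2 \<longrightarrow> (\<forall>a\<in>A. real a \<ge> x) \<longrightarrow> primitive A \<longrightarrow>
       ((\<lambda>a. 1 / (real a * ln (real a))) summable_on A) \<and> f_sum A \<le> 1 + C / ln x)"
proof (intro exI[of _ 4] conjI allI impI)
  show "(4::real) > 0" by simp
  fix x :: real and A :: "nat set"
  assume x: "x \<ge> 2" and A: "\<forall>a\<in>A. real a \<ge> x" and prim: "primitive A"
  have fb: "sum (\<lambda>a. 1 / (real a * ln (real a))) F \<le> (1 + 1 / ln x)^2" if "finite F" "F \<subseteq> A" for F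
  proof (rule finite_bound[OF x that(1)])
    show "\<forall>a\<in>F. x \<le> real a" using A that(2) by blast
    show "primitive F" using prim that(2) unfolding primitive_def by blast
  qed
  have nn: "0 \<le> 1 / (real a * ln (real a))" if "a \<in> A" for a
  proof -
    have "real a \<ge> 2" using A that x by fastforce
    then show ?thesis by simp
  qed
  show sm: "(\<lambda>a. 1 / (real a * ln (real a))) summable_on A"
  proof (rule nonneg_bdd_above_summable_on)
    show "\<And>a. a \<in> A \<Longrightarrow> 0 \<le> 1 / (real a * ln (real a))" by (rule nn)
    show "bdd_above (sum (\<lambda>a. 1 / (real a * ln (real a))) ` {F. F \<subseteq> A \<and> finite F})"
      using fb by (intro bdd_aboveI[of _ "(1 + 1 / ln x)^2"]) auto
  qed
  have "f_sum A \<le> (1 + 1 / ln x)^2"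
    unfolding f_sum_def by (rule infsum_le_finite_sums[OF sm fb])
  also have "\<dots> \<le> 1 + 4 / ln x"
  proof -
    define u where "u = 1 / ln x"
    have lnx: "ln x \<ge> 1/2" using ln2_ge x by (smt (verit) ln_le_cancel_iff)
    have u0: "u > 0" unfolding u_def using lnx by simp
    have u2: "u \<le> 2" unfolding u_def using lnx by (simp add: field_simps)
    have "(1 + u)^2 = 1 + 2*u + u*u" by (simp add: power2_eq_square algebra_simps)
    also have "\<dots> \<le> 1 + 2*u + 2*u" using u0 u2 by (simp add: mult_right_mono)
    also have "\<dots> = 1 + 4 * u" by simp
    finally show ?thesis unfolding u_def by simp
  qed
  finally show "f_sum A \<le> 1 + 4 / ln x" .
qed


end
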